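(* Let $\mathcal G=(V_{\min},V_{\max},E,w,\lambda)$ be a sharp discounted payoff game. If each offset factor $\alpha_e$ ($e\in E$) is drawn independently and uniformly at random from a bounded interval of positive numbers, then $\mathcal G$ is almost surely improving with respect to the adjusted objectives $f'_\sigma$ defined by the sampled factors $\{\alpha_e\mid e\in E\}$.
   Context: A discounted payoff game is a tuple $\mathcal G=(V_{\min},V_{\max},E,w,\lambda)$ with $V=V_{\min}\cup V_{\max}$ finite (disjoint union of Min and Max vertices), $E\subseteq V\times V$ with every vertex having an outgoing edge, $w:E\to\mathbb R$, $\lambda:E\to[0,1)$. A joint strategy is a map $\sigma:V\to V$ with $(v,\sigma(v))\in E$. $H$ is the system of inequations over $x\in\mathbb R^V$ containing, for each edge $e=(v,v')$, $x(v)\ge w_e+\lambda_e x(v')$ if $v\in V_{\max}$ and $x(v)\le w_e+\lambda_e x(v')$ if $v\in V_{\min}$. A basis of $H$ is a set of $|V|$ inequations of $H$ whose equality versions have a unique common solution; if it satisfies $H$ it is the basis valuation of that basis. The game is sharp if every basis valuation satisfies exactly $|V|$ inequations of $H$ with equality. $\mathsf{offset}(x,(v,v'))=x(v)-(w_{(v,v')}+\lambda_{(v,v')}x(v'))$ if $v\in V_{\max}$, and $(w_{(v,v')}+\lambda_{(v,v')}x(v'))-x(v)$ otherwise; with positive factors $\alpha_e$, $\mathsf{offset}'(x,e)=\alpha_e\,\mathsf{offset}(x,e)$ and $f'_\sigma(x)=\sum_{v\in V}\mathsf{offset}'(x,(v,\sigma(v)))$. A sharp game is improving (with respect to $f'$)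 if for every joint strategy $\sigma$ and every basis valuation $\nu$ not minimising $f'_\sigma$ over the solutions of $H$, there is a basis obtained from the basis of $\nu$ by exchanging exactly one inequation whose basis valuation $\nu'$ satisfies $f'_\sigma(\nu')<f'_\sigma(\nu)$. *)

theory Defs
  imports "HOL-Analysis.Analysis"
begin

text \<open>Discounted payoff games on a finite vertex type 'v (V = UNIV).
  Vmin, Vmax: Min and Max vertices; E: edges; w: weights; lam: discount factors.
  Inequations of H are indexed by edges.\<close>

definition ineq_holds ::
  "'v set \<Rightarrow> ('v \<times> 'v \<Rightarrow> real) \<Rightarrow> ('v \<times> 'v \<Rightarrow> real) \<Rightarrow> 'v \<times> 'v \<Rightarrow> ('v \<Rightarrow> real) \<Rightarrow> bool" where
  "ineq_holds Vmax w lam e x =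
     (if fst e \<in> Vmax then x (fst e) \<ge> w e + lam e * x (snd e)
      else x (fst e) \<le> w e + lam e * x (snd e))"

definition tight ::
  "('v \<times> 'v \<Rightarrow> real) \<Rightarrow> ('v \<times> 'v \<Rightarrow> real) \<Rightarrow> 'v \<times> 'v \<Rightarrow> ('v \<Rightarrow> real) \<Rightarrow> bool" where
  "tight w lam e x = (x (fst e) = w e + lam e * x (snd e))"

definition solves_H ::
  "'v set \<Rightarrow> ('v \<times> 'v) set \<Rightarrow> ('v \<times> 'v \<Rightarrow> real) \<Rightarrow> ('v \<times> 'v \<Rightarrow> real) \<Rightarrow> ('v \<Rightarrow> real) \<Rightarrow> bool" where
  "solves_H Vmax E w lam x = (\<forall>e\<in>E. ineq_holds Vmax w lam e x)"

definition is_basis ::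
  "('v::finite \<times> 'v) set \<Rightarrow> ('v \<times> 'v \<Rightarrow> real) \<Rightarrow> ('v \<times> 'v \<Rightarrow> real) \<Rightarrow> ('v \<times> 'v) set \<Rightarrow> bool" where
  "is_basis E w lam B =
     (B \<subseteq> E \<and> card B = CARD('v) \<and> (\<exists>!x. \<forall>e\<in>B. tight w lam e x))"

definition basis_sol ::
  "('v \<times> 'v \<Rightarrow> real) \<Rightarrow> ('v \<times> 'v \<Rightarrow> real) \<Rightarrow> ('v \<times> 'v) set \<Rightarrow> ('v \<Rightarrow> real)" where
  "basis_sol w lam B = (THE x. \<forall>e\<in>B. tight w lam e x)"

definition is_basis_valuation_of ::
  "'v set \<Rightarrow> ('v::finite \<times> 'v) set \<Rightarrow> ('v \<times> 'v \<Rightarrow> real) \<Rightarrow> ('v \<times> 'v \<Rightarrow> real)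
     \<Rightarrow> ('v \<times> 'v) set \<Rightarrow> ('v \<Rightarrow> real) \<Rightarrow> bool" where
  "is_basis_valuation_of Vmax E w lam B x =
     (is_basis E w lam B \<and> basis_sol w lam B = x \<and> solves_H Vmax E w lam x)"

definition sharp ::
  "'v set \<Rightarrow> ('v::finite \<times> 'v) set \<Rightarrow> ('v \<times> 'v \<Rightarrow> real) \<Rightarrow> ('v \<times> 'v \<Rightarrow> real) \<Rightarrow> bool" where
  "sharp Vmax E w lam =
     (\<forall>B x. is_basis_valuation_of Vmax E w lam B x \<longrightarrow>
        card {e \<in> E. tight w lam e x} = CARD('v))"

definition offset ::
  "'v set \<Rightarrow> ('v \<times> 'v \<Rightarrow> real) \<Rightarrow> ('v \<times> 'v \<Rightarrow> real) \<Rightarrow> ('v \<Rightarrow> real) \<Rightarrow> 'v \<times> 'v \<Rightarrow> real" where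
  "offset Vmax w lam x e =
     (if fst e \<in> Vmax then x (fst e) - (w e + lam e * x (snd e))
      else (w e + lam e * x (snd e)) - x (fst e))"

definition joint_strategy :: "('v \<times> 'v) set \<Rightarrow> ('v \<Rightarrow> 'v) \<Rightarrow> bool" where
  "joint_strategy E \<sigma> = (\<forall>v. (v, \<sigma> v) \<in> E)"

definition f_adj ::
  "'v set \<Rightarrow> ('v::finite \<times> 'v \<Rightarrow> real) \<Rightarrow> ('v \<times> 'v \<Rightarrow> real) \<Rightarrow> ('v \<times> 'v \<Rightarrow> real)
     \<Rightarrow> ('v \<Rightarrow> 'v) \<Rightarrow> ('v \<Rightarrow> real) \<Rightarrow> real" where
  "f_adj Vmax w lam \<alpha> \<sigma> x = (\<Sum>v\<in>UNIV. \<alpha> (v, \<sigma> v) * offset Vmax w lam x (v, \<sigma> v))"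

definition improving ::
  "'v set \<Rightarrow> ('v::finite \<times> 'v) set \<Rightarrow> ('v \<times> 'v \<Rightarrow> real) \<Rightarrow> ('v \<times> 'v \<Rightarrow> real)
     \<Rightarrow> ('v \<times> 'v \<Rightarrow> real) \<Rightarrow> bool" where
  "improving Vmax E w lam \<alpha> =
     (sharp Vmax E w lam \<and>
      (\<forall>\<sigma> B \<nu>. joint_strategy E \<sigma> \<longrightarrow> is_basis_valuation_of Vmax E w lam B \<nu> \<longrightarrow>
         (\<exists>x. solves_H Vmax E w lam x \<and> f_adj Vmax w lam \<alpha> \<sigma> x < f_adj Vmax w lam \<alpha> \<sigma> \<nu>) \<longrightarrow>
         (\<exists>e\<in>B. \<exists>e'\<in>E - B. \<exists>\<nu>'.
            is_basis_valuation_of Vmax E w lam (insert e' (B - {e})) \<nu>' \<and>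
            f_adj Vmax w lam \<alpha> \<sigma> \<nu>' < f_adj Vmax w lam \<alpha> \<sigma> \<nu>)))"

end

theory Submission
  imports Defs "HOL-Probability.Infinite_Product_Measure"
begin

definition lin :: "'v set \<Rightarrow> ('v \<times> 'v \<Rightarrow> real) \<Rightarrow> 'v \<times> 'v \<Rightarrow> ('v \<Rightarrow> real) \<Rightarrow> real" where
  "lin Vmax lam e z = (if fst e \<in> Vmax then 1 else -1) * (z (fst e) - lam e * z (snd e))"

lemma offset_shift:
  "offset Vmax w lam (\<lambda>u. x u + t * z u) e = offset Vmax w lam x e + t * lin Vmax lam e z"
  by (auto simp: offset_def lin_def algebra_simps)

lemma lin_shift:
  "lin Vmax lam e (\<lambda>u. x u + t * z u) = lin Vmax lam e x + t * lin Vmax lam e z"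
  by (auto simp: lin_def algebra_simps)

lemma lin_sum:
  "lin Vmax lam e (\<lambda>u. \<Sum>i\<in>I. c i * D i u) = (\<Sum>i\<in>I. c i * lin Vmax lam e (D i))"
  by (auto simp: lin_def algebra_simps sum_distrib_left sum_subtractf)

lemma ineq_offset: "ineq_holds Vmax w lam e x \<longleftrightarrow> offset Vmax w lam x e \<ge> 0"
  by (auto simp: ineq_holds_def offset_def)

lemma tight_offset: "tight w lam e x \<longleftrightarrow> offset Vmax w lam x e = 0"
  by (auto simp: tight_def offset_def)

lemma f_shift:
  "f_adj Vmax w lam \<alpha> \<sigma> (\<lambda>u. x u + t * z u) = f_adj Vmax w lam \<alpha> \<sigma> x
     + t * (\<Sum>v\<in>UNIV. \<alpha> (v, \<sigma> v) * lin Vmax lam (v, \<sigma> v) z)"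
  by (simp add: f_adj_def offset_shift algebra_simps sum.distrib sum_distrib_left)

lemma f_nonneg:
  assumes "joint_strategy E \<sigma>" "\<forall>e\<in>E. \<alpha> e > 0" "solves_H Vmax E w lam x"
  shows "f_adj Vmax w lam \<alpha> \<sigma> x \<ge> 0"
  unfolding f_adj_def
proof (rule sum_nonneg)
  fix v
  have "(v, \<sigma> v) \<in> E" using assms(1) by (simp add: joint_strategy_def)
  then show "0 \<le> \<alpha> (v, \<sigma> v) * offset Vmax w lam x (v, \<sigma> v)"
    using assms(2,3) by (auto simp: solves_H_def ineq_offset)
qed


lemma improving_det:
  fixes Vmax :: "'v::finite set" and E :: "('v \<times> 'v) set"
  assumes sh: "sharp Vmax E w lam" and apos: "\<forall>e\<in>E. \<alpha> e > 0"
  shows "improving Vmax E w lam \<alpha>"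
  unfolding improving_def
proof (intro conjI allI impI sh)
  fix \<sigma> B \<nu>
  assume js: "joint_strategy E \<sigma>" and bv: "is_basis_valuation_of Vmax E w lam B \<nu>"
    and ex: "\<exists>x. solves_H Vmax E w lam x \<and> f_adj Vmax w lam \<alpha> \<sigma> x < f_adj Vmax w lam \<alpha> \<sigma> \<nu>"
  let ?off = "offset Vmax w lam"
  let ?lin = "lin Vmax lam"
  let ?f = "f_adj Vmax w lam \<alpha> \<sigma>"
  define \<Phi> where "\<Phi> z = (\<Sum>v\<in>UNIV. \<alpha> (v, \<sigma> v) * ?lin (v, \<sigma> v) z)" for z
  obtain x where xH: "solves_H Vmax E w lam x" and xf: "?f x < ?f \<nu>" using ex by blast
  have BE: "B \<subseteq> E" and cardB: "card B = CARD('v)" and uq: "\<exists>!x. \<forall>e\<in>B. tight w lam e x"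
    and \<nu>def: "basis_sol w lam B = \<nu>" and \<nu>H: "solves_H Vmax E w lam \<nu>"
    using bv by (auto simp: is_basis_valuation_of_def is_basis_def)
  have finE: "finite E" by simp
  have finB: "finite B" by simp
  have \<nu>tight: "\<forall>e\<in>B. tight w lam e \<nu>"
    using theI'[OF uq] \<nu>def by (simp add: basis_sol_def)
  have \<nu>B: "?off \<nu> e = 0" if "e \<in> B" for e
    using \<nu>tight that tight_offset by blast
  have \<nu>E: "?off \<nu> e \<ge> 0" if "e \<in> E" for e
    using \<nu>H that by (auto simp: solves_H_def ineq_offset)
  have xE: "?off x e \<ge> 0" if "e \<in> E" for e
    using xH that by (auto simp: solves_H_def ineq_offset)
  have injB: "z = (\<lambda>_. 0)" if "\<forall>b\<in>B. ?lin b z = 0" for z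
  proof -
    have "\<forall>e\<in>B. tight w lam e (\<lambda>u. \<nu> u + 1 * z u)"
      using that \<nu>B offset_shift[of Vmax w lam \<nu> 1 z] by (simp add: tight_offset[where Vmax=Vmax])
    then have "(\<lambda>u. \<nu> u + 1 * z u) = \<nu>" using uq \<nu>tight by blast
    then show ?thesis by (metis add_cancel_left_right mult_1)
  qed
  have Tset: "{e \<in> E. tight w lam e \<nu>} = B"
  proof -
    have "card {e \<in> E. tight w lam e \<nu>} = CARD('v)"
      using sh bv unfolding sharp_def by blast
    moreover have "B \<subseteq> {e \<in> E. tight w lam e \<nu>}" using BE \<nu>tight by auto
    ultimately show ?thesis using cardB
      by (metis (no_types, lifting) card_subset_eq finite_subset finE mem_Collect_eq subsetI)
  qed
  have \<nu>pos: "?off \<nu> e > 0" if "e \<in> E - B" for e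
  proof -
    have "\<not> tight w lam e \<nu>" using that Tset by blast
    then have "?off \<nu> e \<noteq> 0" using tight_offset by metis
    moreover have "?off \<nu> e \<ge> 0" using \<nu>E that by blast
    ultimately show ?thesis by linarith
  qed
  obtain h where h: "bij_betw h (UNIV::'v set) B"
    using finite_same_card_bij[of "UNIV::'v set" B] cardB by auto
  have hB: "h u \<in> B" for u using h by (auto simp: bij_betw_def)
  have hsurj: "\<exists>u. b = h u" if "b \<in> B" for b using h that by (auto simp: bij_betw_def)
  have hinj: "h u = h u' \<longleftrightarrow> u = u'" for u u' using h by (auto simp: bij_betw_def inj_def)
  define Lv where "Lv = (\<lambda>z::real^'v. \<chi> u. ?lin (h u) (vec_nth z))"
  have linLv: "linear Lv"
    unfolding Lv_def linear_iff by (auto simp: vec_eq_iff lin_def algebra_simps)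
  have injLv: "inj Lv"
  proof (rule injI)
    fix z z' assume "Lv z = Lv z'"
    then have "\<forall>u. ?lin (h u) (vec_nth z) = ?lin (h u) (vec_nth z')"
      by (auto simp: Lv_def vec_eq_iff)
    have "\<forall>b\<in>B. ?lin b (\<lambda>i. z $ i + (-1) * z' $ i) = 0"
    proof
      fix b assume "b \<in> B"
      then obtain u where "b = h u" using hsurj by blast
      then show "?lin b (\<lambda>i. z $ i + (-1) * z' $ i) = 0"
        using lin_shift[of Vmax lam b "vec_nth z" "-1" "vec_nth z'"] \<open>\<forall>u. _\<close> by simp
    qed
    then have "(\<lambda>i. z $ i + (-1) * z' $ i) = (\<lambda>_. 0)" by (rule injB)
    then show "z = z'" by (auto simp: vec_eq_iff fun_eq_iff)
  qed
  have surjLv: "surj Lv" using linear_injective_imp_surjective[OF linLv injLv] by simp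
  have "\<exists>Dz. \<forall>u. ?lin (h u) Dz = (if u = v then 1 else 0)" for v
  proof -
    obtain z where "Lv z = (\<chi> u. if u = v then 1 else 0)" using surjLv by (metis surjD)
    then have "\<forall>u. ?lin (h u) (vec_nth z) = (if u = v then 1 else 0)"
      by (auto simp: Lv_def vec_eq_iff)
    then show ?thesis by blast
  qed
  then obtain D where D: "\<And>v u. ?lin (h u) (D v) = (if u = v then 1 else 0)" by metis
  have decomp: "z = (\<lambda>i. \<Sum>u\<in>UNIV. ?lin (h u) z * D u i)" for z
  proof -
    have "\<forall>b\<in>B. ?lin b (\<lambda>i. z i + (-1) * (\<Sum>u\<in>UNIV. ?lin (h u) z * D u i)) = 0"
    proof
      fix b assume "b \<in> B"
      then obtain u' where b: "b = h u'" using hsurj by blast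
      have "(\<Sum>u\<in>UNIV. ?lin (h u) z * ?lin (h u') (D u)) = ?lin (h u') z"
        by (simp add: D if_distrib cong: if_cong)
      have "?lin b (\<lambda>i. z i + (-1) * (\<Sum>u\<in>UNIV. ?lin (h u) z * D u i))
          = ?lin b z + (-1) * ?lin b (\<lambda>i. (\<Sum>u\<in>UNIV. ?lin (h u) z * D u i))"
        by (rule lin_shift)
      also have "?lin b (\<lambda>i. (\<Sum>u\<in>UNIV. ?lin (h u) z * D u i))
          = (\<Sum>u\<in>UNIV. ?lin (h u) z * ?lin b (D u))"
        by (rule lin_sum)
      finally show "?lin b (\<lambda>i. z i + (-1) * (\<Sum>u\<in>UNIV. ?lin (h u) z * D u i)) = 0"
        using \<open>(\<Sum>u\<in>UNIV. _) = _\<close> b by simp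
    qed
    from injB[OF this] show ?thesis by (auto simp: fun_eq_iff)
  qed
  have \<Phi>shift: "?f (\<lambda>u. y u + t * z u) = ?f y + t * \<Phi> z" for y t z
    by (simp add: f_shift \<Phi>_def)
  have \<Phi>sum: "\<Phi> (\<lambda>i. \<Sum>u\<in>UNIV. c u * D u i) = (\<Sum>u\<in>UNIV. c u * \<Phi> (D u))" for c
  proof -
    have "\<Phi> (\<lambda>i. \<Sum>u\<in>UNIV. c u * D u i)
        = (\<Sum>v\<in>UNIV. \<Sum>u\<in>UNIV. \<alpha> (v, \<sigma> v) * (c u * ?lin (v, \<sigma> v) (D u)))"
      unfolding \<Phi>_def lin_sum by (simp add: sum_distrib_left)
    also have "\<dots> = (\<Sum>u\<in>UNIV. \<Sum>v\<in>UNIV. \<alpha> (v, \<sigma> v) * (c u * ?lin (v, \<sigma> v) (D u)))"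
      by (rule sum.swap)
    also have "\<dots> = (\<Sum>u\<in>UNIV. c u * \<Phi> (D u))"
      unfolding \<Phi>_def by (simp add: sum_distrib_left mult_ac)
    finally show ?thesis .
  qed
  define d where "d = (\<lambda>u. x u - \<nu> u)"
  have xd: "x = (\<lambda>u. \<nu> u + 1 * d u)" by (simp add: d_def)
  then have "?f x = ?f \<nu> + \<Phi> d" using \<Phi>shift[of \<nu> 1 d] by simp
  then have \<Phi>d: "\<Phi> d < 0" using xf by simp
  have lind: "?lin (h u) d \<ge> 0" for u
  proof -
    have "?off x (h u) = ?off \<nu> (h u) + 1 * ?lin (h u) d"
      using offset_shift[of Vmax w lam \<nu> 1 d "h u"] xd by simp
    then show ?thesis using \<nu>B[OF hB] xE[of "h u"] hB BE by auto
  qed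
  have \<Phi>dsum: "\<Phi> d = (\<Sum>u\<in>UNIV. ?lin (h u) d * \<Phi> (D u))"
    by (subst decomp[of d]) (rule \<Phi>sum)
  have "\<exists>u. \<Phi> (D u) < 0"
  proof (rule ccontr)
    assume "\<not> (\<exists>u. \<Phi> (D u) < 0)"
    then have "\<forall>u. \<Phi> (D u) \<ge> 0" by (simp add: not_less)
    then have "(\<Sum>u\<in>UNIV. ?lin (h u) d * \<Phi> (D u)) \<ge> 0"
      using lind by (intro sum_nonneg mult_nonneg_nonneg) auto
    then show False using \<Phi>d \<Phi>dsum by linarith
  qed
  then obtain u0 where u0: "\<Phi> (D u0) < 0" by blast
  define e where "e = h u0"
  define Dd where "Dd = D u0"
  have eB: "e \<in> B" by (simp add: e_def hB)
  have line: "?lin e Dd = 1" by (simp add: e_def Dd_def D)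
  have linB: "?lin b Dd = 0" if bB: "b \<in> B - {e}" for b
  proof -
    obtain u where u: "b = h u" using bB hsurj by blast
    then have "u \<noteq> u0" using bB by (auto simp: e_def)
    then show ?thesis by (simp add: u Dd_def D)
  qed
  define S where "S = {e' \<in> E - B. ?lin e' Dd < 0}"
  have finS: "finite S" by simp
  have Sne: "S \<noteq> {}"
  proof
    assume S0: "S = {}"
    have feas: "solves_H Vmax E w lam (\<lambda>u. \<nu> u + t * Dd u)" if "t \<ge> 0" for t
      unfolding solves_H_def ineq_offset offset_shift
    proof
      fix e'' assume e'': "e'' \<in> E"
      show "0 \<le> ?off \<nu> e'' + t * ?lin e'' Dd"
      proof (cases "e'' \<in> B")
        case True
        then show ?thesis using \<nu>B linB line that by (cases "e'' = e") auto
      next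
        case False
        then have "e'' \<notin> S" using S0 by blast
        then have "?lin e'' Dd \<ge> 0" using False e'' unfolding S_def by (simp add: not_less)
        then show ?thesis using \<nu>E[OF e''] that by simp
      qed
    qed
    define t where "t = (?f \<nu> + 1) / (- \<Phi> Dd)"
    have "t \<ge> 0" using f_nonneg[OF js apos \<nu>H] u0 by (simp add: t_def Dd_def divide_nonneg_neg)
    have "?f (\<lambda>u. \<nu> u + t * Dd u) = -1"
      using u0 unfolding \<Phi>shift by (simp add: t_def Dd_def)
    moreover have "?f (\<lambda>u. \<nu> u + t * Dd u) \<ge> 0"
      using f_nonneg[OF js apos feas[OF \<open>t \<ge> 0\<close>]] .
    ultimately show False by simp
  qed
  define r where "r e' = ?off \<nu> e' / (- ?lin e' Dd)" for e'
  define ts where "ts = Min (r ` S)"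
  obtain e' where e'S: "e' \<in> S" and tse': "ts = r e'"
  proof -
    have "ts \<in> r ` S" unfolding ts_def using finS Sne by (intro Min_in) auto
    then show ?thesis using that by blast
  qed
  have tsle: "ts \<le> r e''" if "e'' \<in> S" for e''
    using finS that unfolding ts_def by simp
  have e'E: "e' \<in> E - B" and lne': "?lin e' Dd < 0" using e'S by (auto simp: S_def)
  have tspos: "ts > 0" using \<nu>pos[OF e'E] lne' by (simp add: tse' r_def divide_pos_neg)
  define \<nu>' where "\<nu>' = (\<lambda>u. \<nu> u + ts * Dd u)"
  have off\<nu>': "?off \<nu>' e'' = ?off \<nu> e'' + ts * ?lin e'' Dd" for e''
    by (simp add: \<nu>'_def offset_shift)
  have \<nu>'H: "solves_H Vmax E w lam \<nu>'"
    unfolding solves_H_def ineq_offset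
  proof
    fix e'' assume e'': "e'' \<in> E"
    show "0 \<le> ?off \<nu>' e''"
    proof (cases "e'' \<in> B")
      case True
      then show ?thesis using \<nu>B linB line tspos off\<nu>' by (cases "e'' = e") auto
    next
      case False
      show ?thesis
      proof (cases "?lin e'' Dd < 0")
        case True
        then have "e'' \<in> S" using False e'' by (auto simp: S_def)
        from tsle[OF this] have "ts \<le> ?off \<nu> e'' / (- ?lin e'' Dd)" by (simp add: r_def)
        moreover have Lp: "- ?lin e'' Dd > 0" using True by simp
        ultimately have "ts * (- ?lin e'' Dd) \<le> ?off \<nu> e''" using pos_le_divide_eq[OF Lp] by blast
        then show ?thesis by (simp add: off\<nu>')
      next
        case F2: False
        then show ?thesis using \<nu>E[OF e''] tspos off\<nu>' by simp
      qed
    qed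
  qed
  have fless: "?f \<nu>' < ?f \<nu>"
  proof -
    have "?f \<nu>' = ?f \<nu> + ts * \<Phi> Dd" unfolding \<nu>'_def by (rule \<Phi>shift)
    moreover have "ts * \<Phi> Dd < 0" using u0 tspos by (simp add: Dd_def mult_pos_neg)
    ultimately show ?thesis by linarith
  qed
  define B' where "B' = insert e' (B - {e})"
  have tightB': "\<forall>b\<in>B'. tight w lam b \<nu>'"
  proof
    fix b assume "b \<in> B'"
    then consider "b = e'" | "b \<in> B - {e}" unfolding B'_def by blast
    then show "tight w lam b \<nu>'"
    proof cases
      case 1
      have "?off \<nu>' e' = 0" using lne' by (simp add: off\<nu>' tse' r_def)
      then show ?thesis using 1 tight_offset[of w lam e' \<nu>' Vmax] by simp
    next
      case 2
      have "?off \<nu>' b = 0" using \<nu>B linB off\<nu>' 2 by simp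
      then show ?thesis using tight_offset[of w lam b \<nu>' Vmax] by simp
    qed
  qed
  have uniqB': "y = \<nu>'" if "\<forall>b\<in>B'. tight w lam b y" for y
  proof -
    define z where "z = (\<lambda>u. y u - \<nu>' u)"
    have yz: "y = (\<lambda>u. \<nu>' u + 1 * z u)" by (simp add: z_def)
    have lz: "?lin b z = 0" if "b \<in> B'" for b
    proof -
      have "?off y b = 0" "?off \<nu>' b = 0"
        using \<open>\<forall>b\<in>B'. tight w lam b y\<close> tightB' that tight_offset[of w lam b y Vmax]
          tight_offset[of w lam b \<nu>' Vmax] by auto
      then show ?thesis using offset_shift[of Vmax w lam \<nu>' 1 z b] yz by simp
    qed
    have zsum: "z = (\<lambda>i. \<Sum>u\<in>UNIV. ?lin (h u) z * D u i)" by (rule decomp)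
    have "(\<Sum>u\<in>UNIV. ?lin (h u) z * D u i) = ?lin e z * Dd i" for i
    proof -
      have "(\<Sum>u\<in>UNIV. ?lin (h u) z * D u i) = (\<Sum>u\<in>{u0}. ?lin (h u) z * D u i)"
      proof (rule sum.mono_neutral_right)
        show "\<forall>u\<in>UNIV - {u0}. ?lin (h u) z * D u i = 0"
          using lz hB hinj unfolding B'_def e_def by auto
      qed auto
      then show ?thesis by (simp add: e_def Dd_def)
    qed
    then have zD: "z = (\<lambda>i. ?lin e z * Dd i)" using zsum by simp
    have "?lin e' z = ?lin e z * ?lin e' Dd"
      by (subst zD) (simp add: lin_def algebra_simps)
    then have "?lin e z = 0" using lz[of e'] lne' by (simp add: B'_def)
    then have "z = (\<lambda>_. 0)" using zD by simp
    then show ?thesis by (simp add: yz)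
  qed
  have e'notB: "e' \<notin> B" using e'E by blast
  have cardB': "card B' = CARD('v)"
  proof -
    have "card B' = card (B - {e}) + 1" unfolding B'_def using e'notB finB by simp
    also have "\<dots> = card B"
    proof -
      have "card B > 0" using eB finB card_gt_0_iff by blast
      then show ?thesis using eB by (simp add: card_Diff_singleton)
    qed
    finally show ?thesis using cardB by simp
  qed
  have isb: "is_basis E w lam B'"
  proof -
    have "B' \<subseteq> E" using BE e'E by (auto simp: B'_def)
    moreover have "\<exists>!x. \<forall>b\<in>B'. tight w lam b x"
      using tightB' uniqB' by blast
    ultimately show ?thesis unfolding is_basis_def using cardB' by blast
  qed
  have "basis_sol w lam B' = \<nu>'"
    unfolding basis_sol_def using tightB' uniqB' by (rule the_equality) 
  then have "is_basis_valuation_of Vmax E w lam B' \<nu>'"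
    using isb \<nu>'H by (simp add: is_basis_valuation_of_def)
  then show "\<exists>e\<in>B. \<exists>e'\<in>E - B. \<exists>\<nu>'. is_basis_valuation_of Vmax E w lam (insert e' (B - {e})) \<nu>' \<and>
            f_adj Vmax w lam \<alpha> \<sigma> \<nu>' < f_adj Vmax w lam \<alpha> \<sigma> \<nu>"
    using eB e'E fless unfolding B'_def by blast
qed


theorem theorem4p9:
  fixes Vmin Vmax :: "'v::finite set" and E :: "('v \<times> 'v) set"
    and w lam :: "'v \<times> 'v \<Rightarrow> real" and a b :: real
  assumes "Vmin \<inter> Vmax = {}" and "Vmin \<union> Vmax = UNIV"
    and "\<forall>v. \<exists>v'. (v, v') \<in> E"
    and "\<forall>e\<in>E. 0 \<le> lam e \<and> lam e < 1"
    and "sharp Vmax E w lam"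
    and "0 < a" and "a < b"
  shows "AE \<alpha> in PiM E (\<lambda>_. uniform_measure lborel {a..b}). improving Vmax E w lam \<alpha>"
proof -
  let ?M = "uniform_measure lborel {a..b::real}"
  have ps: "prob_space ?M"
    using assms(7) by (intro prob_space_uniform_measure) auto
  have pos: "AE x in ?M. x > 0"
    using assms(6) by (intro AE_uniform_measureI) auto
  have "\<forall>e\<in>E. AE \<alpha> in PiM E (\<lambda>_. ?M). \<alpha> e > 0"
    using AE_PiM_component[of E "\<lambda>_. ?M", OF ps _ pos] by blast
  then have "AE \<alpha> in PiM E (\<lambda>_. ?M). \<forall>e\<in>E. \<alpha> e > 0"
    by (intro eventually_ball_finite) auto
  then show ?thesis
    by eventually_elim (rule improving_det[OF assms(5)])
qed

end
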